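(* Let $A$ be an infinite set and $k\in\mathbb{N}$. Then the $k$-truncated powerset lattice $\mathcal{P}_k(A)$ is $\Theta(n^k)$.
   Context: The lattice $\mathcal{P}_k(A)$ consists of all subsets of $A$ of cardinality at most $k$, ordered by inclusion, together with an adjoined greatest element $\top$ (so the join of two sets is their union if it has at most $k$ elements, and $\top$ otherwise; the least element is $\emptyset$). For a lattice $\mathcal{L}$ with least upper bounds $\bigsqcup$ of finite sets ($\bigsqcup\emptyset=\bot$), the closure set of finite $S\subseteq\mathcal{L}$ is $C(S)=\{\bigsqcup S' : S'\subseteq S\}$, and $CS_{\mathcal{L}}(n)=\max\{|C(S)| : S\subseteq\mathcal{L}\text{ finite}, |S|\le n\}$. For $f,g:\mathbb{N}\to\mathbb{N}$, $f$ is $O(g)$ (resp. $\Omega(g)$) iff there exist $N_0\in\mathbb{N}$ and rational $C>0$ with $f(n)\le Cg(n)$ (resp. $\ge$) for all $n\ge N_0$; $\Theta$ means both. A lattice is $\Theta(f(n))$ iff its $CS$ is. *)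

theory Defs
  imports Complex_Main
begin

text \<open>Generic closure sets for a lattice given by a carrier L and a function lub
  computing least upper bounds of finite subsets (lub {} = bottom).\<close>

definition closure_set :: "('b set \<Rightarrow> 'b) \<Rightarrow> 'b set \<Rightarrow> 'b set" where
  "closure_set lub S = {lub S' | S'. S' \<subseteq> S}"

definition CS :: "'b set \<Rightarrow> ('b set \<Rightarrow> 'b) \<Rightarrow> nat \<Rightarrow> nat" where
  "CS L lub n = Max {card (closure_set lub S) | S. S \<subseteq> L \<and> finite S \<and> card S \<le> n}"

text \<open>The k-truncated powerset lattice P_k(A): elements Some X with X a subset of A of
  cardinality at most k, plus the adjoined top element None.\<close>

definition Pk :: "'a set \<Rightarrow> nat \<Rightarrow> 'a set option set" where
  "Pk A k = {Some X | X. X \<subseteq> A \<and> finite X \<and> card X \<le> k} \<union> {None}"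

definition Pk_lub :: "nat \<Rightarrow> 'a set option set \<Rightarrow> 'a set option" where
  "Pk_lub k S' = (if None \<in> S' then None
     else (let U = \<Union> (the ` S') in if finite U \<and> card U \<le> k then Some U else None))"

definition bigO :: "(nat \<Rightarrow> nat) \<Rightarrow> (nat \<Rightarrow> nat) \<Rightarrow> bool" where
  "bigO f g \<longleftrightarrow> (\<exists>N0::nat. \<exists>C::rat. C > 0 \<and> (\<forall>n\<ge>N0. of_nat (f n) \<le> C * of_nat (g n)))"

definition bigOmega :: "(nat \<Rightarrow> nat) \<Rightarrow> (nat \<Rightarrow> nat) \<Rightarrow> bool" where
  "bigOmega f g \<longleftrightarrow> (\<exists>N0::nat. \<exists>C::rat. C > 0 \<and> (\<forall>n\<ge>N0. of_nat (f n) \<ge> C * of_nat (g n)))"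

definition bigTheta :: "(nat \<Rightarrow> nat) \<Rightarrow> (nat \<Rightarrow> nat) \<Rightarrow> bool" where
  "bigTheta f g \<longleftrightarrow> bigO f g \<and> bigOmega f g"

end

theory Submission
  imports Defs
begin

lemma lub_cover:
  assumes "S' \<subseteq> S" "Pk_lub k S' = Some U"
  shows "\<exists>T\<subseteq>S. finite T \<and> card T \<le> k \<and> Pk_lub k T = Some U"
proof -
  from assms have nN: "None \<notin> S'" and U: "U = \<Union>(the ` S')" "finite U" "card U \<le> k"
    by (auto simp: Pk_lub_def Let_def split: if_splits)
  have "\<forall>x\<in>U. \<exists>t\<in>S'. x \<in> the t" using U by auto
  then obtain f where f: "\<forall>x\<in>U. f x \<in> S' \<and> x \<in> the (f x)" by metis
  have un: "\<Union>(the ` (f ` U)) = U" using f U(1) by auto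
  have nT: "None \<notin> f ` U" using f nN by auto
  have c: "card (f ` U) \<le> k" using card_image_le[OF U(2), of f] U(3) by linarith
  have "Pk_lub k (f ` U) = Some U" using un nT U by (simp add: Pk_lub_def)
  moreover have "f ` U \<subseteq> S" using f assms(1) by auto
  ultimately show ?thesis using c U(2) by blast
qed

lemma lub_ins: "Pk_lub k (insert (Some {}) T) = Pk_lub k T"
  by (simp add: Pk_lub_def)

lemma list_rep:
  assumes "finite T" "card T \<le> k"
  shows "\<exists>xs. length xs = k \<and> set xs \<subseteq> insert (Some {}) T \<and> Pk_lub k (set xs) = Pk_lub k T"
proof -
  obtain ys where ys: "set ys = T" "distinct ys" using finite_distinct_list[OF assms(1)] by blast
  define xs where "xs = ys @ replicate (k - card T) (Some {})"
  have "length xs = k" using ys assms(2) distinct_card[OF ys(2)] by (simp add: xs_def)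
  moreover have "set xs = T \<or> set xs = insert (Some {}) T" using ys by (auto simp: xs_def)
  ultimately show ?thesis using lub_ins by (metis Un_insert_left sup_bot_left sup_ge2 insert_mono subset_insertI subset_refl)
qed

lemma closure_card_le:
  assumes "finite S"
  shows "card (closure_set lub S) \<le> 2 ^ card S"
proof -
  have "closure_set lub S = lub ` Pow S" by (auto simp: closure_set_def)
  then show ?thesis using card_image_le[of "Pow S" lub] assms by (simp add: card_Pow)
qed

lemma closure_finite: "finite S \<Longrightarrow> finite (closure_set lub S)"
proof -
  assume "finite S"
  moreover have "closure_set lub S = lub ` Pow S" by (auto simp: closure_set_def)
  ultimately show ?thesis by simp
qed

lemma upper:
  assumes "finite S" "card S \<le> n"
  shows "card (closure_set (Pk_lub k) S) \<le> 1 + (n+1)^k"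
proof -
  define L where "L = {xs. set xs \<subseteq> insert (Some {}) S \<and> length xs = k}"
  have fL: "finite L" unfolding L_def using assms(1) by (simp add: finite_lists_length_eq)
  have cL: "card L \<le> (n+1)^k"
  proof -
    have "card L = card (insert (Some {}) S) ^ k" unfolding L_def using assms(1)
      by (simp add: card_lists_length_eq)
    moreover have "card (insert (Some {}) S) \<le> n + 1" using assms
      by (simp add: card_insert_if)
    ultimately show ?thesis by (simp add: power_mono)
  qed
  have sub: "closure_set (Pk_lub k) S \<subseteq> insert None ((\<lambda>xs. Pk_lub k (set xs)) ` L)"
  proof
    fix y assume "y \<in> closure_set (Pk_lub k) S"
    then obtain S' where S': "S' \<subseteq> S" "y = Pk_lub k S'" by (auto simp: closure_set_def)
    show "y \<in> insert None ((\<lambda>xs. Pk_lub k (set xs)) ` L)"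
    proof (cases y)
      case None then show ?thesis by simp
    next
      case (Some U)
      then obtain T where T: "T \<subseteq> S" "finite T" "card T \<le> k" "Pk_lub k T = Some U"
        using lub_cover[OF S'(1)] S'(2) by metis
      obtain xs where xs: "length xs = k" "set xs \<subseteq> insert (Some {}) T" "Pk_lub k (set xs) = Pk_lub k T"
        using list_rep[OF T(2,3)] by blast
      have "xs \<in> L" using xs T(1) unfolding L_def by auto
      then show ?thesis using xs T(4) Some by force
    qed
  qed
  have "card (closure_set (Pk_lub k) S) \<le> card (insert None ((\<lambda>xs. Pk_lub k (set xs)) ` L))"
    using sub fL by (intro card_mono) auto
  also have "\<dots> \<le> Suc (card ((\<lambda>xs. Pk_lub k (set xs)) ` L))"
    by (simp add: card_insert_if fL)
  also have "\<dots> \<le> Suc (card L)" using card_image_le[OF fL] by simp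
  finally show ?thesis using cL by simp
qed

lemma lower:
  assumes "infinite A"
  shows "\<exists>S. S \<subseteq> Pk A k \<and> finite S \<and> card S \<le> n \<and> n choose k \<le> card (closure_set (Pk_lub k) S)"
proof (cases "k = 0")
  case True
  have "closure_set (Pk_lub k) ({}::'a set option set) = {Pk_lub k {}}" by (auto simp: closure_set_def)
  then show ?thesis using True by (intro exI[of _ "{}::'a set option set"]) (simp add: Pk_def)
next
  case False
  obtain B where B: "finite B" "card B = n" "B \<subseteq> A" using infinite_arbitrarily_large[OF assms] by blast
  define S where "S = (\<lambda>a. Some {a}) ` B"
  have SP: "S \<subseteq> Pk A k" using B False unfolding S_def Pk_def by auto
  have fS: "finite S" "card S \<le> n" using B card_image_le[OF B(1), of "\<lambda>a. Some {a}"] unfolding S_def by auto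
  have sub: "Some ` {X. X \<subseteq> B \<and> card X = k} \<subseteq> closure_set (Pk_lub k) S"
  proof
    fix y assume "y \<in> Some ` {X. X \<subseteq> B \<and> card X = k}"
    then obtain X where X: "y = Some X" "X \<subseteq> B" "card X = k" by auto
    have fX: "finite X" using X B(1) finite_subset by auto
    have n1: "None \<notin> (\<lambda>a. Some {a}) ` X" by blast
    have n2: "\<Union>(the ` ((\<lambda>a. Some {a}) ` X)) = X" by (simp add: image_image)
    have "Pk_lub k ((\<lambda>a. Some {a}) ` X) = Some X" unfolding Pk_lub_def Let_def using n1 n2 fX X(3) by simp
    moreover have "(\<lambda>a. Some {a}) ` X \<subseteq> S" using X unfolding S_def by auto
    ultimately have "\<exists>S'. y = Pk_lub k S' \<and> S' \<subseteq> S" using X(1) by metis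
    then show "y \<in> closure_set (Pk_lub k) S" unfolding closure_set_def by simp
  qed
  have "n choose k = card {X. X \<subseteq> B \<and> card X = k}" using n_subsets[OF B(1)] B(2) by simp
  also have "\<dots> = card (Some ` {X. X \<subseteq> B \<and> card X = k})" by (simp add: card_image)
  also have "\<dots> \<le> card (closure_set (Pk_lub k) S)" using sub closure_finite[OF fS(1)] by (rule card_mono[rotated])
  finally show ?thesis using SP fS by blast
qed

lemma V_finite: "finite {card (closure_set (Pk_lub k) S) | S. S \<subseteq> Pk A k \<and> finite S \<and> card S \<le> n}"
proof (rule finite_subset[of _ "{..2^n}"])
  show "{card (closure_set (Pk_lub k) S) | S. S \<subseteq> Pk A k \<and> finite S \<and> card S \<le> n} \<subseteq> {..2^n}"
  proof
    fix c assume "c \<in> {card (closure_set (Pk_lub k) S) | S. S \<subseteq> Pk A k \<and> finite S \<and> card S \<le> n}"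
    then obtain S where S: "c = card (closure_set (Pk_lub k) S)" "S \<subseteq> Pk A k" "finite S" "card S \<le> n" by blast
    have "c \<le> 2 ^ card S" using closure_card_le[OF S(3)] S(1) by simp
    also have "\<dots> \<le> 2 ^ n" using S(4) by (simp add: power_increasing)
    finally show "c \<in> {..2^n}" by simp
  qed
qed simp

lemma CS_upper: "CS (Pk A k) (Pk_lub k) n \<le> 1 + (n+1)^k"
  unfolding CS_def
proof (rule Max.boundedI[OF V_finite])
  show "{card (closure_set (Pk_lub k) S) | S. S \<subseteq> Pk A k \<and> finite S \<and> card S \<le> n} \<noteq> {}"
  proof -
    have "card (closure_set (Pk_lub k) ({}::'a set option set)) \<in> {card (closure_set (Pk_lub k) S) | S. S \<subseteq> Pk A k \<and> finite S \<and> card S \<le> n}"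
      by (intro CollectI exI[of _ "{}"]) simp
    then show ?thesis by (metis empty_iff)
  qed
next
  fix c assume "c \<in> {card (closure_set (Pk_lub k) S) | S. S \<subseteq> Pk A k \<and> finite S \<and> card S \<le> n}"
  then show "c \<le> 1 + (n+1)^k" using upper by auto
qed

lemma CS_lower:
  assumes "infinite A"
  shows "n choose k \<le> CS (Pk A k) (Pk_lub k) n"
proof -
  obtain S where S: "S \<subseteq> Pk A k" "finite S" "card S \<le> n" "n choose k \<le> card (closure_set (Pk_lub k) S)"
    using lower[OF assms] by blast
  have "card (closure_set (Pk_lub k) S) \<le> CS (Pk A k) (Pk_lub k) n"
    unfolding CS_def using S by (intro Max_ge[OF V_finite]) blast
  then show ?thesis using S(4) by linarith
qed

theorem mainTheorem7:
  fixes A :: "'a set" and k :: nat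
  assumes "infinite A"
  shows "bigTheta (CS (Pk A k) (Pk_lub k)) (\<lambda>n. n ^ k)"
  unfolding bigTheta_def
proof
  show "bigO (CS (Pk A k) (Pk_lub k)) (\<lambda>n. n ^ k)"
    unfolding bigO_def
  proof (intro exI conjI allI impI)
    show "(0::rat) < of_nat (2^k + 1)" by (rule of_nat_0_less_iff[THEN iffD2]) simp
    fix n :: nat assume n: "1 \<le> n"
    have "(n+1)^k \<le> (2*n)^k" using n by (intro power_mono) auto
    also have "\<dots> = 2^k * n^k" by (simp add: power_mult_distrib)
    finally have a: "(n+1)^k \<le> 2^k * n^k" .
    have b: "1 \<le> n^k" using n by simp
    have "CS (Pk A k) (Pk_lub k) n \<le> (2^k + 1) * n^k"
      using CS_upper[of A k n] a b by (simp add: algebra_simps)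
    then show "of_nat (CS (Pk A k) (Pk_lub k) n) \<le> (of_nat (2^k + 1)::rat) * of_nat (n^k)"
      by (metis of_nat_le_iff of_nat_mult)
  qed
next
  show "bigOmega (CS (Pk A k) (Pk_lub k)) (\<lambda>n. n ^ k)"
    unfolding bigOmega_def
  proof (intro exI conjI allI impI)
    have kk: "(0::rat) < of_nat k ^ k" by (cases "k = 0") auto
    show "(0::rat) < 1 / of_nat k ^ k" using kk by simp
    fix n :: nat assume n: "k \<le> n"
    have "(1 / of_nat k ^ k) * of_nat (n^k) = (of_nat n / of_nat k :: rat) ^ k"
      by (simp add: power_divide)
    also have "\<dots> \<le> of_nat (n choose k)" using binomial_ge_n_over_k_pow_k[OF n] by simp
    also have "\<dots> \<le> of_nat (CS (Pk A k) (Pk_lub k) n)" using CS_lower[OF assms] by simp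
    finally show "(1 / of_nat k ^ k) * of_nat (n^k) \<le> (of_nat (CS (Pk A k) (Pk_lub k) n) :: rat)" .
  qed
qed

end
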